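(* Let $m,d_1,d_2$ be positive integers, $\bm{B}\in\mathbb{C}^{m\times d_1}$, $\bm{A}\in\mathbb{C}^{m\times d_2}$ and $\bm{y}\in\mathbb{C}^m$. For $j=1,\dots,m$ let $\bm{b}_j\in\mathbb{C}^{d_1}$ and $\bm{a}_j\in\mathbb{C}^{d_2}$ be the $j$-th columns of $\bm{B}^{\mathsf H}$ and $\bm{A}^{\mathsf H}$ respectively. Define $F_1:\mathbb{R}^{d_1}\times\mathbb{R}^{d_2}\to\mathbb{R}$ by $$F_1(\bm{h},\bm{x})=\frac14\|\bm{Bh}\|_4^4+\frac14\|\bm{Ax}\|_4^4+\frac12\Big(\|\bm{Bh}\odot\bm{Ax}\|_2^2+\|\bm{y}\odot\bm{Bh}\|_2^2+\|\bm{Ax}\|_2^2+\|\bm{y}\|_2^2\Big),$$ and $H:\mathbb{R}^{d_1}\times\mathbb{R}^{d_2}\to\mathbb{R}$ by $$H(\bm{h},\bm{x})=\frac14\big(\|\bm{h}\|_2^2+\|\bm{x}\|_2^2\big)^2+\frac12\big(\|\bm{h}\|_2^2+\|\bm{x}\|_2^2\big).$$ Then for every real $L$ satisfying $$L\ \ge\ \sum_{j=1}^m\Big(3\|\bm{b}_j\|_2^4+3\|\bm{a}_j\|_2^4+\|\bm{b}_j\|_2^2\|\bm{a}_j\|_2^2+|y_j|^2\|\bm{b}_j\|_2^2+\|\bm{a}_j\|_2^2\Big),$$ the function $LH-F_1$ is convex on $\mathbb{R}^{d_1+d_2}$.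
   Context: $\odot$ denotes the elementwise (Hadamard) product of vectors in $\mathbb{C}^m$; for $\bm{w}\in\mathbb{C}^m$, $\|\bm{w}\|_2^2=\sum_j|w_j|^2$ and $\|\bm{w}\|_4^4=\sum_j|w_j|^4$. $\bm{B}^{\mathsf H}$ is the conjugate transpose, so $(\bm{Bh})_j=\bm{b}_j^{\mathsf H}\bm{h}$ and $(\bm{Ax})_j=\bm{a}_j^{\mathsf H}\bm{x}$. The variables $\bm{h},\bm{x}$ are real vectors, and $(\bm{h},\bm{x})$ is identified with a vector of $\mathbb{R}^{d_1+d_2}$. *)

theory Defs
  imports "HOL-Analysis.Analysis"
begin

definition cvec :: "real^'n \<Rightarrow> complex^'n" where
  "cvec h = (\<chi> i. complex_of_real (h $ i))"

text \<open>The matrix B in C^(m x d1) is  complex^'d1^'m  (row j is  B $ j, i.e. conj b_j);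
  (B h)_j = b_j^H h = (B *v h) $ j.\<close>

definition F1 :: "complex^'d1^'m \<Rightarrow> complex^'d2^'m \<Rightarrow> complex^'m \<Rightarrow>
    ((real^'d1) \<times> (real^'d2)) \<Rightarrow> real" where
  "F1 B A y z =
     (let Bh = B *v cvec (fst z); Ax = A *v cvec (snd z) in
     (1/4) * (\<Sum>j\<in>UNIV. cmod (Bh $ j) ^ 4)
   + (1/4) * (\<Sum>j\<in>UNIV. cmod (Ax $ j) ^ 4)
   + (1/2) * ((\<Sum>j\<in>UNIV. cmod (Bh $ j * Ax $ j) ^ 2)
            + (\<Sum>j\<in>UNIV. cmod (y $ j * Bh $ j) ^ 2)
            + (\<Sum>j\<in>UNIV. cmod (Ax $ j) ^ 2)
            + (\<Sum>j\<in>UNIV. cmod (y $ j) ^ 2)))"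

definition Hfun :: "((real^'d1) \<times> (real^'d2)) \<Rightarrow> real" where
  "Hfun z = (1/4) * (norm (fst z) ^ 2 + norm (snd z) ^ 2) ^ 2
             + (1/2) * (norm (fst z) ^ 2 + norm (snd z) ^ 2)"

end

theory Submission imports Defs begin

lemma uu_expand: "(B *v cvec h) $ j = (\<Sum>i\<in>UNIV. B$j$i * complex_of_real (h$i))"
  by (simp add: matrix_vector_mult_def cvec_def)

lemma uu_lin: "(B *v cvec (h + t *\<^sub>R k)) $ j = (B *v cvec h)$j + of_real t * (B *v cvec k)$j"
  by (simp add: uu_expand sum_distrib_left sum.distrib[symmetric] algebra_simps)

lemma cmod_lin: "cmod (a + of_real t * b)^2 = cmod a^2 + 2*t*Re(a*cnj b) + t^2*cmod b^2"
  unfolding cmod_power2 by (simp add: power2_eq_square algebra_simps)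

lemma re_cs: "Re(a*cnj b)^2 \<le> cmod a^2 * cmod b^2"
proof -
  have "\<bar>Re(a*cnj b)\<bar> \<le> cmod a * cmod b" using abs_Re_le_cmod[of "a*cnj b"] by (simp add: norm_mult)
  then have "\<bar>Re(a*cnj b)\<bar>^2 \<le> (cmod a * cmod b)^2" by (intro power_mono) auto
  then show ?thesis by (simp add: power_mult_distrib)
qed

lemma cs: "cmod((B *v cvec h)$j)^2 \<le> norm (B$j)^2 * norm h^2"
proof -
  have "cmod((B *v cvec h)$j) \<le> (\<Sum>i\<in>UNIV. cmod (B$j$i) * \<bar>h$i\<bar>)"
    unfolding uu_expand by (rule order_trans[OF norm_sum]) (simp add: norm_mult)
  also have "\<dots> = inner (\<chi> i. cmod (B$j$i)) (\<chi> i. \<bar>h$i\<bar>)"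
    by (simp add: inner_vec_def)
  also have "\<dots> \<le> norm (\<chi> i. cmod (B$j$i)) * norm (\<chi> i. \<bar>h$i\<bar>)"
    by (rule norm_cauchy_schwarz)
  also have "norm (\<chi> i. cmod (B$j$i)) = norm (B$j)" by (simp add: norm_vec_def)
  also have "norm (\<chi> i. \<bar>h$i\<bar>) = norm h" by (simp add: norm_vec_def)
  finally have "cmod((B *v cvec h)$j) \<le> norm (B$j) * norm h" .
  then have "cmod((B *v cvec h)$j)^2 \<le> (norm (B$j) * norm h)^2" by (intro power_mono) auto
  then show ?thesis by (simp add: power_mult_distrib)
qed

lemma norm_lin: "norm (h + t *\<^sub>R k)^2 = norm h^2 + 2*t*(h \<bullet> k) + t^2*norm k^2"
  for h k :: "'a::real_inner"
  unfolding power2_norm_eq_inner by (simp add: inner_add_left inner_add_right inner_commute algebra_simps power2_eq_square)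

lemma algE:
  fixes Rh Rx Dh Dx S U0 U1 U2 V0 V1 V2 Y c al be :: real
  assumes "U1^2 \<le> U0*U2" "V1^2 \<le> V0*V2"
    "U0 \<le> be*Rh" "U2 \<le> be*Dh" "V0 \<le> al*Rx" "V2 \<le> al*Dx"
    "0\<le>U0" "0\<le>U2" "0\<le>V0" "0\<le>V2" "0\<le>Rh" "0\<le>Rx" "0\<le>Dh" "0\<le>Dx"
    "0\<le>Y" "0\<le>al" "0\<le>be" "3*be^2+3*al^2+al*be+Y*be+al \<le> c"
  shows "0 \<le> c*(2*S^2 + (Rh+Rx)*(Dh+Dx) + (Dh+Dx))
     - (2*U1^2+U0*U2+2*V1^2+V0*V2+U2*V0+4*U1*V1+U0*V2+Y*U2+V2)"
proof -
  have p1: "U0*U2 \<le> (be*Rh)*(be*Dh)" using assms by (intro mult_mono) auto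
  have p2: "V0*V2 \<le> (al*Rx)*(al*Dx)" using assms by (intro mult_mono) auto
  have p3: "U2*V0 \<le> (be*Dh)*(al*Rx)" using assms by (intro mult_mono) auto
  have p4: "U0*V2 \<le> (be*Rh)*(al*Dx)" using assms by (intro mult_mono) auto
  have p6: "Y*U2 \<le> Y*(be*Dh)" using assms by (intro mult_left_mono) auto
  define X where "X = Rh*Dh"
  define Z where "Z = Rx*Dx"
  have X0: "0 \<le> X" "0 \<le> Z" using assms by (auto simp: X_def Z_def)
  have w: "(U1*V1)^2 \<le> (be^2*X)*(al^2*Z)"
  proof -
    have "(U1*V1)^2 = U1^2*V1^2" by (simp add: power_mult_distrib)
    also have "\<dots> \<le> (U0*U2)*(V0*V2)" using assms by (intro mult_mono) auto
    also have "\<dots> \<le> ((be*Rh)*(be*Dh))*((al*Rx)*(al*Dx))" using p1 p2 assms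
      by (intro mult_mono) auto
    also have "\<dots> = (be^2*X)*(al^2*Z)" by (simp add: X_def Z_def power2_eq_square algebra_simps)
    finally show ?thesis .
  qed
  define M where "M = 3*be^2*Z + 3*al^2*X"
  have M0: "0 \<le> M" using X0 by (simp add: M_def)
  have "(3*be^2*Z - 3*al^2*X)^2 \<ge> 0" by simp
  then have "M^2 \<ge> 36*((be^2*X)*(al^2*Z))" unfolding M_def by (simp add: power2_eq_square algebra_simps)
  moreover have "(4*(U1*V1))^2 = 16*(U1*V1)^2" by (simp add: power_mult_distrib)
  moreover have "0 \<le> (U1*V1)^2" by simp
  ultimately have "(4*(U1*V1))^2 \<le> M^2" using w by linarith
  then have p5: "4*(U1*V1) \<le> M" using M0 power2_le_imp_le by blast
  have RD: "(Rh+Rx)*(Dh+Dx) \<ge> 0" "Dh + Dx \<ge> 0" using assms by auto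
  have n1: "0 \<le> be*be" "0 \<le> al*al" "0 \<le> al*be" "0 \<le> Y*be" using assms by auto
  have cc: "3*be^2+3*al^2+al*be \<le> c" "Y*be+al \<le> c" using assms(18) n1 assms(16)
    unfolding power2_eq_square by linarith+
  have e1: "c*(2*S^2 + (Rh+Rx)*(Dh+Dx) + (Dh+Dx)) = c*(2*S^2) + c*((Rh+Rx)*(Dh+Dx)) + c*(Dh+Dx)"
    by (simp add: algebra_simps)
  have c1: "c*((Rh+Rx)*(Dh+Dx)) \<ge> (3*be^2+3*al^2+al*be)*((Rh+Rx)*(Dh+Dx))"
    using cc RD by (intro mult_right_mono) auto
  have c2: "c*(Dh+Dx) \<ge> (Y*be+al)*(Dh+Dx)"
    using cc RD by (intro mult_right_mono) auto
  have c0: "0 \<le> c" using cc(2) n1 assms(16) by linarith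
  have c3: "c*(2*S^2) \<ge> 0" using c0 by simp
  have e2: "(3*be^2+3*al^2+al*be)*((Rh+Rx)*(Dh+Dx)) = 3*be^2*X + 3*be^2*Z + 3*al^2*X + 3*al^2*Z
     + (be*Rh)*(al*Dx) + (be*Dh)*(al*Rx) + al*be*X + al*be*Z + (3*be^2+3*al^2)*(Rh*Dx + Rx*Dh)"
    unfolding X_def Z_def by (simp add: algebra_simps power2_eq_square)
  have e3: "(Y*be+al)*(Dh+Dx) = Y*(be*Dh) + al*Dx + (Y*be*Dx + al*Dh)"
    by (simp add: algebra_simps)
  have q: "0 \<le> Y*be*Dx + al*Dh" "0 \<le> al*be*X" "0 \<le> al*be*Z" "0 \<le> (3*be^2+3*al^2)*(Rh*Dx + Rx*Dh)" using assms X0 by auto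
  have p1': "U0*U2 \<le> be^2*X" using p1 by (simp add: X_def power2_eq_square mult_ac)
  have p2': "V0*V2 \<le> al^2*Z" using p2 by (simp add: Z_def power2_eq_square mult_ac)
  have u1: "2*U1^2 + U0*U2 \<le> 3*be^2*X" using assms(1) p1' by linarith
  have v1: "2*V1^2 + V0*V2 \<le> 3*al^2*Z" using assms(2) p2' by linarith
  have "4*U1*V1 \<le> 3*be^2*Z + 3*al^2*X" using p5 unfolding M_def by (simp add: mult.assoc)
  then show ?thesis using e1 e2 e3 c1 c2 c3 q u1 v1 p3 p4 p6 assms(6) by linarith
qed
lemma conv1d_abs:
  fixes Q U V Q' U' V' :: "real \<Rightarrow> real" and qd ud vd c Y :: real
  assumes dQ: "\<And>t. (Q has_real_derivative Q' t) (at t)" "\<And>t. (Q' has_real_derivative qd) (at t)"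
    and dU: "\<And>t. (U has_real_derivative U' t) (at t)" "\<And>t. (U' has_real_derivative ud) (at t)"
    and dV: "\<And>t. (V has_real_derivative V' t) (at t)" "\<And>t. (V' has_real_derivative vd) (at t)"
    and pos: "\<And>t. 0 \<le> c*((Q' t)^2/2 + Q t * qd/2 + qd/2) - ((U' t)^2/2 + U t*ud/2 + (V' t)^2/2 + V t* vd/2
         + (ud*V t + 2*U' t*V' t + U t* vd + Y*ud + vd)/2)"
  shows "convex_on UNIV (\<lambda>t. c*((Q t)^2/4 + Q t/2) - ((U t)^2/4 + (V t)^2/4 + (U t*V t + Y*U t + V t + Y)/2))"
proof (rule f''_ge0_imp_convex)
  show "convex (UNIV::real set)" by simp
  show "((\<lambda>t. c*((Q t)^2/4 + Q t/2) - ((U t)^2/4 + (V t)^2/4 + (U t*V t + Y*U t + V t + Y)/2))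
     has_real_derivative (c*(Q t*Q' t/2 + Q' t/2) - (U t*U' t/2 + V t*V' t/2
      + (U' t*V t + U t*V' t + Y*U' t + V' t)/2))) (at t)" for t
    by (rule derivative_eq_intros dQ dU dV refl | simp)+
  show "((\<lambda>t. c*(Q t*Q' t/2 + Q' t/2) - (U t*U' t/2 + V t*V' t/2
      + (U' t*V t + U t*V' t + Y*U' t + V' t)/2)) has_real_derivative
      (c*((Q' t)^2/2 + Q t * qd/2 + qd/2) - ((U' t)^2/2 + U t*ud/2 + (V' t)^2/2 + V t* vd/2
         + (ud*V t + 2*U' t*V' t + U t* vd + Y*ud + vd)/2))) (at t)" for t
    by (rule derivative_eq_intros dQ dU dV refl | simp add: power2_eq_square field_simps)+
qed (use pos in auto)


lemma algE2:
  fixes Rh Rx Dh Dx S U0 U1 U2 V0 V1 V2 Y c al be :: real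
  assumes "U1^2 \<le> U0*U2" "V1^2 \<le> V0*V2"
    "U0 \<le> be*Rh" "U2 \<le> be*Dh" "V0 \<le> al*Rx" "V2 \<le> al*Dx"
    "0\<le>U0" "0\<le>U2" "0\<le>V0" "0\<le>V2" "0\<le>Rh" "0\<le>Rx" "0\<le>Dh" "0\<le>Dx"
    "0\<le>Y" "0\<le>al" "0\<le>be" "3*be^2+3*al^2+al*be+Y*be+al \<le> c"
  shows "0 \<le> c*(((2*S))^2/2 + (Rh+Rx) * (2*(Dh+Dx))/2 + (2*(Dh+Dx))/2) - (((2*U1))^2/2 + U0*(2*U2)/2 + ((2*V1))^2/2 + V0* (2*V2)/2
         + ((2*U2)*V0 + 2*(2*U1)*(2*V1) + U0* (2*V2) + Y*(2*U2) + (2*V2))/2)"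
proof -
  have "0 \<le> c*(2*S^2 + (Rh+Rx)*(Dh+Dx) + (Dh+Dx))
     - (2*U1^2+U0*U2+2*V1^2+V0*V2+U2*V0+4*U1*V1+U0*V2+Y*U2+V2)" by (rule algE[OF assms])
  then show ?thesis by (simp add: power2_eq_square field_simps)
qed

lemma conv1d:
  fixes Rh Sh Dh Rx Sx Dx U0 U1 U2 V0 V1 V2 Y c al be :: real
  assumes "U1^2 \<le> U0*U2" "V1^2 \<le> V0*V2"
    "\<And>t. U0+2*U1*t+U2*t^2 \<le> be*(Rh+2*Sh*t+Dh*t^2)"
    "\<And>t. V0+2*V1*t+V2*t^2 \<le> al*(Rx+2*Sx*t+Dx*t^2)"
    "U2 \<le> be*Dh" "V2 \<le> al*Dx"
    "\<And>t. 0 \<le> U0+2*U1*t+U2*t^2" "\<And>t. 0 \<le> V0+2*V1*t+V2*t^2" "0\<le>U2" "0\<le>V2"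
    "\<And>t. 0 \<le> Rh+2*Sh*t+Dh*t^2" "\<And>t. 0 \<le> Rx+2*Sx*t+Dx*t^2" "0\<le>Dh" "0\<le>Dx"
    "0\<le>Y" "0\<le>al" "0\<le>be" "3*be^2+3*al^2+al*be+Y*be+al \<le> c"
  shows "convex_on UNIV (\<lambda>t. c*(((Rh+2*Sh*t+Dh*t^2)+(Rx+2*Sx*t+Dx*t^2))^2/4
        + ((Rh+2*Sh*t+Dh*t^2)+(Rx+2*Sx*t+Dx*t^2))/2)
     - ((U0+2*U1*t+U2*t^2)^2/4 + (V0+2*V1*t+V2*t^2)^2/4
        + ((U0+2*U1*t+U2*t^2)*(V0+2*V1*t+V2*t^2) + Y*(U0+2*U1*t+U2*t^2) + (V0+2*V1*t+V2*t^2) + Y)/2))"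
proof (rule conv1d_abs[where Q="\<lambda>t. (Rh+2*Sh*t+Dh*t^2)+(Rx+2*Sx*t+Dx*t^2)"
    and Q'="\<lambda>t. 2*(Sh+Sx+(Dh+Dx)*t)" and qd="2*(Dh+Dx)"
    and U="\<lambda>t. U0+2*U1*t+U2*t^2" and U'="\<lambda>t. 2*(U1+U2*t)" and ud="2*U2"
    and V="\<lambda>t. V0+2*V1*t+V2*t^2" and V'="\<lambda>t. 2*(V1+V2*t)" and vd="2*V2"])
  fix t :: real
  show "((\<lambda>t. (Rh+2*Sh*t+Dh*t^2)+(Rx+2*Sx*t+Dx*t^2)) has_real_derivative 2*(Sh+Sx+(Dh+Dx)*t)) (at t)"
    by (rule derivative_eq_intros refl | simp add: algebra_simps)+
  show "((\<lambda>t. 2*(Sh+Sx+(Dh+Dx)*t)) has_real_derivative 2*(Dh+Dx)) (at t)"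
    by (rule derivative_eq_intros refl | simp add: algebra_simps)+
  show "((\<lambda>t. U0+2*U1*t+U2*t^2) has_real_derivative 2*(U1+U2*t)) (at t)"
    by (rule derivative_eq_intros refl | simp add: algebra_simps)+
  show "((\<lambda>t. 2*(U1+U2*t)) has_real_derivative 2*U2) (at t)"
    by (rule derivative_eq_intros refl | simp add: algebra_simps)+
  show "((\<lambda>t. V0+2*V1*t+V2*t^2) has_real_derivative 2*(V1+V2*t)) (at t)"
    by (rule derivative_eq_intros refl | simp add: algebra_simps)+
  show "((\<lambda>t. 2*(V1+V2*t)) has_real_derivative 2*V2) (at t)"
    by (rule derivative_eq_intros refl | simp add: algebra_simps)+
next
  fix t :: real
  show "0 \<le> c*((2*(Sh+Sx+(Dh+Dx)*t))^2/2 + ((Rh+2*Sh*t+Dh*t^2)+(Rx+2*Sx*t+Dx*t^2)) * (2*(Dh+Dx))/2 + (2*(Dh+Dx))/2)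
     - ((2*(U1+U2*t))^2/2 + (U0+2*U1*t+U2*t^2)*(2*U2)/2 + (2*(V1+V2*t))^2/2 + (V0+2*V1*t+V2*t^2)* (2*V2)/2
         + ((2*U2)*(V0+2*V1*t+V2*t^2) + 2*(2*(U1+U2*t))*(2*(V1+V2*t)) + (U0+2*U1*t+U2*t^2)* (2*V2) + Y*(2*U2) + (2*V2))/2)"
  proof (rule algE2)
    show "(U1+U2*t)^2 \<le> (U0+2*U1*t+U2*t^2)*U2" using assms(1)
      by (simp add: algebra_simps power2_eq_square)
    show "(V1+V2*t)^2 \<le> (V0+2*V1*t+V2*t^2)*V2" using assms(2)
      by (simp add: algebra_simps power2_eq_square)
  qed (use assms in auto)
qed

definition fj :: "complex^'d1^'m \<Rightarrow> complex^'d2^'m \<Rightarrow> complex^'m \<Rightarrow> 'm \<Rightarrow> ((real^'d1) \<times> (real^'d2)) \<Rightarrow> real" where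
 "fj B A y j z = (1/4)*cmod((B *v cvec (fst z))$j)^4 + (1/4)*cmod((A *v cvec (snd z))$j)^4
   + (1/2)*(cmod((B *v cvec (fst z))$j * (A *v cvec (snd z))$j)^2 + cmod(y$j * (B *v cvec (fst z))$j)^2
   + cmod((A *v cvec (snd z))$j)^2 + cmod(y$j)^2)"

lemma F1_sum: "F1 B A y z = (\<Sum>j\<in>UNIV. fj B A y j z)"
  unfolding F1_def fj_def Let_def by (simp only: sum.distrib distrib_left sum_distrib_left)

lemma fj_alt: "fj B A y j z = (cmod((B *v cvec (fst z))$j)^2)^2/4 + (cmod((A *v cvec (snd z))$j)^2)^2/4
   + ((cmod((B *v cvec (fst z))$j)^2) * (cmod((A *v cvec (snd z))$j)^2) + cmod(y$j)^2 * (cmod((B *v cvec (fst z))$j)^2)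
   + (cmod((A *v cvec (snd z))$j)^2) + cmod(y$j)^2)/2"
  unfolding fj_def by (simp add: norm_mult power_mult_distrib flip: power_mult)

lemma convex_lines:
  fixes g :: "'a::real_vector \<Rightarrow> real"
  assumes "\<And>p d. convex_on UNIV (\<lambda>t. g (p + t *\<^sub>R d))"
  shows "convex_on UNIV g"
proof (rule convex_onI)
  fix t :: real and x y :: 'a assume t: "0<t" "t<1"
  have "g (x + ((1-t)*0 + t*1) *\<^sub>R (y-x)) \<le> (1-t)*g(x + 0 *\<^sub>R (y-x)) + t*g(x + 1 *\<^sub>R (y-x))"
    using convex_onD[OF assms[of x "y-x"], of t 0 1] t by simp
  moreover have "(1-t) *\<^sub>R x + t *\<^sub>R y = x + t *\<^sub>R (y-x)" by (simp add: algebra_simps)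
  ultimately show "g((1-t) *\<^sub>R x + t *\<^sub>R y) \<le> (1-t)*g x + t*g y" by simp
qed simp

lemma Gj_convex:
  fixes B :: "complex^'d1^'m" and A :: "complex^'d2^'m" and y :: "complex^'m"
  assumes c: "3 * norm (B $ j) ^ 4 + 3 * norm (A $ j) ^ 4
              + norm (B $ j) ^ 2 * norm (A $ j) ^ 2 + cmod (y $ j) ^ 2 * norm (B $ j) ^ 2
              + norm (A $ j) ^ 2 \<le> c"
  shows "convex_on UNIV (\<lambda>z. c * Hfun z - fj B A y j z)"
proof (rule convex_lines)
  fix p d :: "(real^'d1) \<times> (real^'d2)"
  obtain h x where p: "p = (h,x)" by (cases p)
  obtain k w where d: "d = (k,w)" by (cases d)
  define u where "u = (\<lambda>h. (B *v cvec h)$j)"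
  define v where "v = (\<lambda>x. (A *v cvec x)$j)"
  define Rh where "Rh = norm h^2"
  define Sh where "Sh = h \<bullet> k"
  define Dh where "Dh = norm k^2"
  define Rx where "Rx = norm x^2"
  define Sx where "Sx = x \<bullet> w"
  define Dx where "Dx = norm w^2"
  define U0 where "U0 = cmod (u h)^2"
  define U1 where "U1 = Re (u h * cnj (u k))"
  define U2 where "U2 = cmod (u k)^2"
  define V0 where "V0 = cmod (v x)^2"
  define V1 where "V1 = Re (v x * cnj (v w))"
  define V2 where "V2 = cmod (v w)^2"
  define Y where "Y = cmod (y$j)^2"
  define be where "be = norm (B$j)^2"
  define al where "al = norm (A$j)^2"
  have Ut: "cmod (u (h + t *\<^sub>R k))^2 = U0+2*U1*t+U2*t^2" for t
    unfolding u_def U0_def U1_def U2_def uu_lin cmod_lin by simp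
  have Vt: "cmod (v (x + t *\<^sub>R w))^2 = V0+2*V1*t+V2*t^2" for t
    unfolding v_def V0_def V1_def V2_def uu_lin cmod_lin by simp
  have Qh: "norm (h + t *\<^sub>R k)^2 = Rh+2*Sh*t+Dh*t^2" for t
    unfolding Rh_def Sh_def Dh_def norm_lin by simp
  have Qx: "norm (x + t *\<^sub>R w)^2 = Rx+2*Sx*t+Dx*t^2" for t
    unfolding Rx_def Sx_def Dx_def norm_lin by simp
  have cv: "convex_on UNIV (\<lambda>t. c*(((Rh+2*Sh*t+Dh*t^2)+(Rx+2*Sx*t+Dx*t^2))^2/4
        + ((Rh+2*Sh*t+Dh*t^2)+(Rx+2*Sx*t+Dx*t^2))/2)
     - ((U0+2*U1*t+U2*t^2)^2/4 + (V0+2*V1*t+V2*t^2)^2/4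
        + ((U0+2*U1*t+U2*t^2)*(V0+2*V1*t+V2*t^2) + Y*(U0+2*U1*t+U2*t^2) + (V0+2*V1*t+V2*t^2) + Y)/2))"
  proof (rule conv1d)
    show "U1^2 \<le> U0*U2" unfolding U0_def U1_def U2_def by (rule re_cs)
    show "V1^2 \<le> V0*V2" unfolding V0_def V1_def V2_def by (rule re_cs)
    show "U0+2*U1*t+U2*t^2 \<le> be*(Rh+2*Sh*t+Dh*t^2)" for t
      unfolding Ut[symmetric] Qh[symmetric] be_def u_def by (rule cs)
    show "V0+2*V1*t+V2*t^2 \<le> al*(Rx+2*Sx*t+Dx*t^2)" for t
      unfolding Vt[symmetric] Qx[symmetric] al_def v_def by (rule cs)
    show "U2 \<le> be*Dh" unfolding U2_def be_def Dh_def u_def by (rule cs)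
    show "V2 \<le> al*Dx" unfolding V2_def al_def Dx_def v_def by (rule cs)
    show "0 \<le> U0+2*U1*t+U2*t^2" for t unfolding Ut[symmetric] by simp
    show "0 \<le> V0+2*V1*t+V2*t^2" for t unfolding Vt[symmetric] by simp
    show "0 \<le> Rh+2*Sh*t+Dh*t^2" for t unfolding Qh[symmetric] by simp
    show "0 \<le> Rx+2*Sx*t+Dx*t^2" for t unfolding Qx[symmetric] by simp
    show "3*be^2+3*al^2+al*be+Y*be+al \<le> c" using c unfolding al_def be_def Y_def
      by (simp add: mult.commute flip: power_mult)
  qed (auto simp: U2_def V2_def Dh_def Dx_def Y_def al_def be_def)
  have "c * Hfun (p + t *\<^sub>R d) - fj B A y j (p + t *\<^sub>R d) =
     c*(((Rh+2*Sh*t+Dh*t^2)+(Rx+2*Sx*t+Dx*t^2))^2/4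
        + ((Rh+2*Sh*t+Dh*t^2)+(Rx+2*Sx*t+Dx*t^2))/2)
     - ((U0+2*U1*t+U2*t^2)^2/4 + (V0+2*V1*t+V2*t^2)^2/4
        + ((U0+2*U1*t+U2*t^2)*(V0+2*V1*t+V2*t^2) + Y*(U0+2*U1*t+U2*t^2) + (V0+2*V1*t+V2*t^2) + Y)/2)" for t
  proof -
    have "fst (p + t *\<^sub>R d) = h + t *\<^sub>R k" "snd (p + t *\<^sub>R d) = x + t *\<^sub>R w" by (simp_all add: p d)
    then show ?thesis
      unfolding fj_alt Hfun_def
      using Ut[of t] Vt[of t] Qh[of t] Qx[of t] unfolding u_def v_def Y_def
      by (simp add: algebra_simps)
  qed
  with cv show "convex_on UNIV (\<lambda>t. c * Hfun (p + t *\<^sub>R d) - fj B A y j (p + t *\<^sub>R d))"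
    by simp
qed

lemma Hfun_convex: "convex_on UNIV (Hfun :: ((real^'d1) \<times> (real^'d2)) \<Rightarrow> real)"
proof (rule convex_lines)
  fix p d :: "(real^'d1) \<times> (real^'d2)"
  obtain h x where p: "p = (h,x)" by (cases p)
  obtain k w where d: "d = (k,w)" by (cases d)
  define Rh where "Rh = norm h^2"
  define Sh where "Sh = h \<bullet> k"
  define Dh where "Dh = norm k^2"
  define Rx where "Rx = norm x^2"
  define Sx where "Sx = x \<bullet> w"
  define Dx where "Dx = norm w^2"
  have Qh: "norm (h + t *\<^sub>R k)^2 = Rh+2*Sh*t+Dh*t^2" for t
    unfolding Rh_def Sh_def Dh_def norm_lin by simp
  have Qx: "norm (x + t *\<^sub>R w)^2 = Rx+2*Sx*t+Dx*t^2" for t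
    unfolding Rx_def Sx_def Dx_def norm_lin by simp
  have cv: "convex_on UNIV (\<lambda>t. 1*(((Rh+2*Sh*t+Dh*t^2)+(Rx+2*Sx*t+Dx*t^2))^2/4
        + ((Rh+2*Sh*t+Dh*t^2)+(Rx+2*Sx*t+Dx*t^2))/2)
     - ((0+2*0*t+0*t^2)^2/4 + (0+2*0*t+0*t^2)^2/4
        + ((0+2*0*t+0*t^2)*(0+2*0*t+0*t^2) + 0*(0+2*0*t+0*t^2) + (0+2*0*t+0*t^2) + 0)/2))"
  proof (rule conv1d[where al=0 and be=0])
    show "0 \<le> Rh+2*Sh*t+Dh*t^2" for t unfolding Qh[symmetric] by simp
    show "0 \<le> Rx+2*Sx*t+Dx*t^2" for t unfolding Qx[symmetric] by simp
  qed (auto simp: Dh_def Dx_def)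
  have "Hfun (p + t *\<^sub>R d) = 1*(((Rh+2*Sh*t+Dh*t^2)+(Rx+2*Sx*t+Dx*t^2))^2/4
        + ((Rh+2*Sh*t+Dh*t^2)+(Rx+2*Sx*t+Dx*t^2))/2)
     - ((0+2*0*t+0*t^2)^2/4 + (0+2*0*t+0*t^2)^2/4
        + ((0+2*0*t+0*t^2)*(0+2*0*t+0*t^2) + 0*(0+2*0*t+0*t^2) + (0+2*0*t+0*t^2) + 0)/2)" for t
    unfolding Hfun_def using Qh[of t] Qx[of t] by (simp add: p d algebra_simps)
  with cv show "convex_on UNIV (\<lambda>t. Hfun (p + t *\<^sub>R d))" by simp
qed

lemma convex_on_sum_fun:
  assumes "finite I" "\<And>i. i \<in> I \<Longrightarrow> convex_on UNIV (f i)"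
  shows "convex_on UNIV (\<lambda>z. \<Sum>i\<in>I. f i z)"
  using assms
proof (induction I rule: finite_induct)
  case empty
  then show ?case by (simp add: convex_on_const)
next
  case (insert a I)
  then show ?case by (simp add: convex_on_add)
qed

theorem theorem1:
  fixes B :: "complex^'d1^'m" and A :: "complex^'d2^'m" and y :: "complex^'m" and L :: real
  assumes "L \<ge> (\<Sum>j\<in>UNIV. 3 * norm (B $ j) ^ 4 + 3 * norm (A $ j) ^ 4
              + norm (B $ j) ^ 2 * norm (A $ j) ^ 2 + cmod (y $ j) ^ 2 * norm (B $ j) ^ 2
              + norm (A $ j) ^ 2)"
  shows "convex_on UNIV (\<lambda>z. L * Hfun z - F1 B A y z)"
proof -
  define cj where "cj = (\<lambda>j. 3 * norm (B $ j) ^ 4 + 3 * norm (A $ j) ^ 4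
              + norm (B $ j) ^ 2 * norm (A $ j) ^ 2 + cmod (y $ j) ^ 2 * norm (B $ j) ^ 2
              + norm (A $ j) ^ 2)"
  have eq: "L * Hfun z - F1 B A y z = (L - (\<Sum>j\<in>UNIV. cj j)) * Hfun z
      + (\<Sum>j\<in>UNIV. cj j * Hfun z - fj B A y j z)" for z
    unfolding F1_sum by (simp add: sum_subtractf sum_distrib_left sum_distrib_right algebra_simps)
  have "convex_on UNIV (\<lambda>z. (L - (\<Sum>j\<in>UNIV. cj j)) * Hfun z
      + (\<Sum>j\<in>UNIV. cj j * Hfun z - fj B A y j z))"
  proof (rule convex_on_add)
    show "convex_on UNIV (\<lambda>z. (L - (\<Sum>j\<in>UNIV. cj j)) * Hfun z)"
      using assms Hfun_convex unfolding cj_def by (intro convex_on_cmul) auto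
    show "convex_on UNIV (\<lambda>z. \<Sum>j\<in>UNIV. cj j * Hfun z - fj B A y j z)"
      by (rule convex_on_sum_fun) (auto intro: Gj_convex simp: cj_def)
  qed
  then show ?thesis using eq by simp
qed

end
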